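(* Let $p$ be a prime and $A$ a commutative nilpotent $\mathbb{F}_p$-algebra of dimension $n$ with $A^p=0$; let $e$ be the integer with $A^e\ne0$, $A^{e+1}=0$. Let $i(A)$ be the number of ideals of $A$ and $s(A)$ the number of $\mathbb{F}_p$-subspaces of $A$. (1) If $e=2$, $p\ge3$ and $n\ge3$, then $i(A)\le \frac{2}{p}s(A)$. (2) If $e=3$, $p\ge3$ and $n\ge4$, then $i(A)\le\frac{2}{p^2}s(A)$.
   Context: Algebras are commutative, associative, not necessarily unital. *)

theory Defs
  imports Complex_Main "HOL-Computational_Algebra.Primes"
begin

text \<open>A (not necessarily unital) commutative associative algebra over F_p is modelled as a
type of class comm_ring (non-unital commutative ring) whose additive group has exponent p.
F_p-subspaces are then exactly the additive subgroups, and algebra ideals are the additive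
subgroups closed under multiplication by arbitrary elements.\<close>

definition nsmul :: "nat \<Rightarrow> 'a::ab_group_add \<Rightarrow> 'a" where
  "nsmul k x = (\<Sum>i<k. x)"

definition is_subspace :: "'a::ab_group_add set \<Rightarrow> bool" where
  "is_subspace S \<longleftrightarrow> 0 \<in> S \<and> (\<forall>x\<in>S. \<forall>y\<in>S. x + y \<in> S) \<and> (\<forall>x\<in>S. - x \<in> S)"

definition is_ideal :: "'a::comm_ring set \<Rightarrow> bool" where
  "is_ideal I \<longleftrightarrow> is_subspace I \<and> (\<forall>a. \<forall>x\<in>I. a * x \<in> I)"

text \<open>Additive span (= F_p-span when the additive group has exponent p).\<close>
inductive_set addspan :: "'a::ab_group_add set \<Rightarrow> 'a set" for S where
  zero: "0 \<in> addspan S"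
| base: "x \<in> S \<Longrightarrow> x \<in> addspan S"
| add: "x \<in> addspan S \<Longrightarrow> y \<in> addspan S \<Longrightarrow> x + y \<in> addspan S"
| neg: "x \<in> addspan S \<Longrightarrow> - x \<in> addspan S"

text \<open>Powers of the algebra: A^1 = A, A^(k+1) = span of products a*b with b in A^k.
(A^0 is set to A by convention; it is never used.)\<close>
fun apow :: "nat \<Rightarrow> 'a::comm_ring set" where
  "apow 0 = UNIV"
| "apow (Suc k) = (if k = 0 then UNIV else addspan {a * b | a b. b \<in> apow k})"

definition num_ideals :: "'a::comm_ring itself \<Rightarrow> nat" where
  "num_ideals _ = card {I :: 'a set. is_ideal I}"

definition num_subspaces :: "'a::comm_ring itself \<Rightarrow> nat" where
  "num_subspaces _ = card {S :: 'a set. is_subspace S}"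

end

theory Submission
  imports Defs "HOL-Number_Theory.Cong"
begin


lemma nsmul_0[simp]: "nsmul 0 x = 0" by (simp add: nsmul_def)
lemma nsmul_Suc: "nsmul (Suc k) x = nsmul k x + x" by (simp add: nsmul_def)
lemma nsmul_1[simp]: "nsmul 1 x = x" by (simp add: nsmul_def)
lemma nsmul_add: "nsmul (a+b) x = nsmul a x + nsmul b x"
  by (induction b) (simp_all add: nsmul_Suc add.assoc)
lemma nsmul_mult: "nsmul (a*b) x = nsmul a (nsmul b x)"
proof (induction a)
  case 0 then show ?case by simp
next
  case (Suc a)
  have "nsmul (Suc a * b) x = nsmul (a*b) x + nsmul b x"
    by (metis add.commute mult_Suc nsmul_add)
  then show ?case using Suc by (simp add: nsmul_Suc)
qed
lemma nsmul_plus: "nsmul k (x+y) = nsmul k x + nsmul k (y::'a::ab_group_add)"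
  by (induction k) (simp_all add: nsmul_Suc algebra_simps)
lemma nsmul_zero[simp]: "nsmul k (0::'a::ab_group_add) = 0"
  by (induction k) (simp_all add: nsmul_Suc)
lemma nsmul_uminus: "nsmul k (-x) = - nsmul k (x::'a::ab_group_add)"
  by (induction k) (simp_all add: nsmul_Suc algebra_simps)
lemma nsmul_mult_left: "nsmul k (a*x) = a * nsmul k (x::'a::comm_ring)"
  by (simp add: nsmul_def sum_distrib_left)

lemma subspace_diff: "is_subspace S \<Longrightarrow> x \<in> S \<Longrightarrow> y \<in> S \<Longrightarrow> x - y \<in> S"
  unfolding is_subspace_def by (metis diff_conv_add_uminus)
lemma nsmul_mem: "is_subspace S \<Longrightarrow> x \<in> S \<Longrightarrow> nsmul k x \<in> S"
  by (induction k) (auto simp: nsmul_Suc is_subspace_def)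


definition ext :: "'a::ab_group_add set \<Rightarrow> 'a \<Rightarrow> 'a set" where
  "ext S x = {s + nsmul k x | s k. s \<in> S}"

lemma ext_least: assumes "is_subspace U" "S \<subseteq> U" "x \<in> U" shows "ext S x \<subseteq> U"
proof
  fix y assume "y \<in> ext S x"
  then obtain s k where "y = s + nsmul k x" "s \<in> S" unfolding ext_def by blast
  then show "y \<in> U" using assms nsmul_mem[of U x k] unfolding is_subspace_def by blast
qed

lemma ext_memI: "s \<in> S \<Longrightarrow> s + nsmul k x \<in> ext S x"
  unfolding ext_def by blast

lemma ext_iff: "y \<in> ext S x \<longleftrightarrow> (\<exists>s k. s \<in> S \<and> y = s + nsmul k x)"
  unfolding ext_def by blast

lemma ext_base: "S \<subseteq> ext S x"
  using ext_memI[of _ S 0 x] by auto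

lemma ext_x: "0 \<in> S \<Longrightarrow> x \<in> ext S x"
  by (metis add_0_left ext_memI nsmul_1)

lemma ext_mono: "S \<subseteq> T \<Longrightarrow> ext S x \<subseteq> ext T x"
  unfolding ext_def by blast

lemma ext2_iff: "x \<in> ext (ext S a) b \<longleftrightarrow> (\<exists>s k j. s \<in> S \<and> x = s + nsmul k a + nsmul j b)"
  unfolding ext_def by blast

lemma ext_comm_sub: "ext (ext S a) b \<subseteq> ext (ext S b) a"
proof
  fix x assume "x \<in> ext (ext S a) b"
  then obtain s k j where "s \<in> S" "x = s + nsmul k a + nsmul j b" unfolding ext2_iff by blast
  moreover have "s + nsmul k a + nsmul j b = s + nsmul j b + nsmul k a" by (simp add: algebra_simps)
  ultimately show "x \<in> ext (ext S b) a" unfolding ext2_iff by blast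
qed

lemma ext_comm: "ext (ext S a) b = ext (ext S b) a"
  using ext_comm_sub by blast

locale fp = fixes p :: nat and ty :: "'a::{comm_ring,finite} itself"
  assumes pr: "prime p" and ex: "\<And>x::'a. nsmul p x = 0"
begin

lemma p_pos: "p > 0" using pr prime_gt_0_nat by blast

lemma nsmul_dvd: "p dvd k \<Longrightarrow> nsmul k (x::'a) = 0"
  by (auto simp: nsmul_mult ex)

lemma nsmul_mod: "nsmul k (x::'a) = nsmul (k mod p) x"
proof -
  have "nsmul k x = nsmul (k mod p) x + nsmul (p * (k div p)) x"
    by (metis add.commute div_mult_mod_eq mult.commute nsmul_add)
  then show ?thesis by (simp add: nsmul_dvd)
qed

lemma neg_nsmul: "- (x::'a) = nsmul (p - 1) x"
proof -
  have "nsmul (p - 1) x + x = 0" using p_pos ex[of x]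
    by (metis Suc_diff_1 nsmul_Suc)
  then show ?thesis by (simp add: add_eq_0_iff2)
qed

lemma nsmul_inv: assumes "\<not> p dvd k" shows "\<exists>j. nsmul j (nsmul k (x::'a)) = x"
proof -
  have "coprime k p" using assms pr by (metis coprime_commute prime_imp_coprime)
  then obtain j where "[k * j = Suc 0] (mod p)" using cong_solve_coprime_nat by blast
  then have "(j*k) mod p = 1 mod p" by (simp add: cong_def mult.commute)
  then have "nsmul (j*k) x = x" by (metis nsmul_mod nsmul_1)
  then show ?thesis by (auto simp: nsmul_mult)
qed

lemma nsmul_notin: "is_subspace S \<Longrightarrow> (x::'a) \<notin> S \<Longrightarrow> nsmul k x \<in> S \<Longrightarrow> p dvd k"
  using nsmul_inv nsmul_mem by metis

lemma ext_sub: assumes "is_subspace S" shows "is_subspace (ext S (x::'a))"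
proof -
  have S0: "0 \<in> S" and Sadd: "\<And>a b. a \<in> S \<Longrightarrow> b \<in> S \<Longrightarrow> a + b \<in> S"
    and Sneg: "\<And>a. a \<in> S \<Longrightarrow> - a \<in> S" using assms unfolding is_subspace_def by auto
  have "0 \<in> ext S x" using S0 ext_base by blast
  moreover have "u + v \<in> ext S x" if hu: "u \<in> ext S x" and hv: "v \<in> ext S x" for u v
  proof -
    obtain s k where u: "u = s + nsmul k x" "s \<in> S" using hu unfolding ext_iff by blast
    obtain s' k' where v: "v = s' + nsmul k' x" "s' \<in> S" using hv unfolding ext_iff by blast
    have "u + v = (s + s') + nsmul (k + k') x" unfolding u v nsmul_add by (simp add: algebra_simps)
    then show ?thesis using ext_memI[OF Sadd[OF u(2) v(2)]] by metis
  qed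
  moreover have "- u \<in> ext S x" if hu: "u \<in> ext S x" for u
  proof -
    obtain s k where u: "u = s + nsmul k x" "s \<in> S" using hu unfolding ext_iff by blast
    have e: "- nsmul k x = nsmul ((p - 1) * k) x" unfolding nsmul_mult by (rule neg_nsmul)
    have "- u = (- s) + (- nsmul k x)" unfolding u by (simp add: algebra_simps)
    then have "- u = (- s) + nsmul ((p - 1) * k) x" unfolding e .
    then show ?thesis using ext_memI[OF Sneg[OF u(2)]] by metis
  qed
  ultimately show ?thesis unfolding is_subspace_def by blast
qed

lemma ext_absorb: "is_subspace S \<Longrightarrow> (x::'a) \<in> S \<Longrightarrow> ext S x = S"
  using ext_least[of S S x] ext_base[of S x] by blast

lemma ext_least2: "is_subspace U \<Longrightarrow> S \<subseteq> U \<Longrightarrow> x \<in> U \<Longrightarrow> y \<in> U \<Longrightarrow> ext (ext S x) (y::'a) \<subseteq> U"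
  by (meson ext_least)

lemma diff_nsmul_in: assumes "is_subspace S" "(z::'a) \<notin> S" "k < p" "k' < p"
  "nsmul k z - nsmul k' z \<in> S" shows "k = k'"
proof (cases "k' \<le> k")
  case True
  then have "nsmul k z - nsmul k' z = nsmul (k - k') z"
    by (metis add_diff_cancel_left' le_add_diff_inverse nsmul_add)
  then have "p dvd (k - k')" using assms nsmul_notin by metis
  moreover have "k - k' < p" using assms(3) by linarith
  ultimately have "k - k' = 0" by (metis dvd_imp_le not_less not_gr0)
  then show ?thesis using True by simp
next
  case False
  then have "nsmul k' z - nsmul k z = nsmul (k' - k) z"
    by (metis add_diff_cancel_left' le_add_diff_inverse nat_le_linear nsmul_add)
  moreover have "nsmul k' z - nsmul k z \<in> S" using assms(1,5)
    by (metis is_subspace_def minus_diff_eq)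
  ultimately have "p dvd (k' - k)" using assms nsmul_notin by metis
  moreover have "k' - k < p" using assms(4) by linarith
  ultimately have "k' - k = 0" by (metis dvd_imp_le not_less not_gr0)
  then show ?thesis using False by simp
qed

end



definition ann :: "'a::comm_ring set" where "ann = {x. \<forall>a. a * x = 0}"
definition prods :: "'a::comm_ring set \<Rightarrow> 'a set" where "prods S = {a * x | a x. x \<in> S}"
definition zsel :: "'a::comm_ring set \<Rightarrow> 'a" where
  "zsel S = (SOME z. z \<in> prods S \<and> z \<in> ann \<and> z \<noteq> 0)"

lemma ann_sub: "is_subspace ann"
  unfolding is_subspace_def ann_def by (auto simp: algebra_simps)

lemma prods_ext: assumes "w \<in> ann" shows "prods (ext S w) = prods S"
proof
  show "prods (ext S w) \<subseteq> prods S"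
  proof
    fix y assume "y \<in> prods (ext S w)"
    then obtain a x where "y = a * x" "x \<in> ext S w" unfolding prods_def by blast
    then obtain s k where "s \<in> S" "x = s + nsmul k w" unfolding ext_iff by blast
    then have "y = a * s" using \<open>y = a * x\<close> assms
      by (simp add: distrib_left nsmul_mult_left[symmetric] ann_def)
    then show "y \<in> prods S" using \<open>s \<in> S\<close> unfolding prods_def by blast
  qed
next
  show "prods S \<subseteq> prods (ext S w)" unfolding prods_def using ext_base by blast
qed

lemma zsel_ext: "w \<in> ann \<Longrightarrow> zsel (ext S w) = zsel S"
  unfolding zsel_def using prods_ext by metis

lemma zsel_prop: "\<exists>z\<in>prods S. z \<in> ann \<and> z \<noteq> 0 \<Longrightarrow> zsel S \<in> prods S \<and> zsel S \<in> ann \<and> zsel S \<noteq> 0"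
  unfolding zsel_def by (rule someI_ex) blast

lemma ideal_prods: "is_ideal S \<Longrightarrow> prods S \<subseteq> S"
  unfolding is_ideal_def prods_def by blast

lemma zero_sub: "is_subspace {0}" unfolding is_subspace_def by simp

lemma fiber_count:
  assumes "finite X" "finite Y" "\<forall>S\<in>Y. \<exists>K. K \<subseteq> {S'\<in>X. f S' = S} \<and> m \<le> card K"
  shows "m * card Y \<le> card X"
proof -
  have "\<forall>S\<in>Y. m \<le> card {S'\<in>X. f S' = S}"
  proof
    fix S assume "S \<in> Y"
    then obtain K where "K \<subseteq> {S'\<in>X. f S' = S}" "m \<le> card K" using assms(3) by blast
    then show "m \<le> card {S'\<in>X. f S' = S}" using assms(1) card_mono[of "{S'\<in>X. f S' = S}" K] by auto
  qed
  then have "(\<Sum>S\<in>Y. m) \<le> (\<Sum>S\<in>Y. card {S'\<in>X. f S' = S})"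
    by (intro sum_mono) blast
  then have "m * card Y \<le> (\<Sum>S\<in>Y. card {S'\<in>X. f S' = S})" by (simp add: mult.commute)
  also have "\<dots> = card (\<Union>S\<in>Y. {S'\<in>X. f S' = S})"
    by (rule card_UN_disjoint[symmetric]) (use assms in auto)
  also have "\<dots> \<le> card X" by (rule card_mono) (use assms in auto)
  finally show ?thesis .
qed

context fp begin

lemma ext_sub2: "is_subspace S \<Longrightarrow> is_subspace (ext (ext S a) (b::'a))"
  by (simp add: ext_sub)

lemma complement: assumes "is_subspace S" "(z::'a) \<in> S" "z \<noteq> 0"
  shows "\<exists>T. is_subspace T \<and> T \<subseteq> S \<and> z \<notin> T \<and> ext T z = S"
proof -
  let ?A = "{T. is_subspace T \<and> T \<subseteq> S \<and> z \<notin> T}"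
  have "{0} \<in> ?A" using assms zero_sub unfolding is_subspace_def by auto
  moreover have "finite ?A" by simp
  ultimately obtain T where T: "T \<in> ?A" and mx: "\<forall>b\<in>?A. T \<subseteq> b \<longrightarrow> T = b"
    using finite_has_maximal[of ?A] by blast
  have Ts: "is_subspace T" "T \<subseteq> S" "z \<notin> T" using T by auto
  have T0: "0 \<in> T" using Ts is_subspace_def by blast
  have "ext T z = S"
  proof (rule ccontr)
    assume ne: "ext T z \<noteq> S"
    have sub: "ext T z \<subseteq> S" using ext_least Ts assms by blast
    then obtain x where x: "x \<in> S" "x \<notin> ext T z" using ne by blast
    have Tzs: "is_subspace (ext T z)" using ext_sub Ts by blast
    have "z \<notin> ext T x"
    proof
      assume "z \<in> ext T x"
      then obtain t k where tk: "t \<in> T" "z = t + nsmul k x" unfolding ext_iff by blast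
      have "z - t \<in> ext T z" using subspace_diff[OF Tzs] ext_x[OF T0] ext_base tk by blast
      then have "nsmul k x \<in> ext T z" using tk by simp
      then have "p dvd k" using nsmul_notin Tzs x by blast
      then have "z = t" using tk nsmul_dvd by simp
      then show False using tk Ts by blast
    qed
    then have "ext T x \<in> ?A" using ext_sub[OF Ts(1)] ext_least[OF assms(1) Ts(2) x(1)] by blast
    moreover have "T \<subseteq> ext T x" by (rule ext_base)
    ultimately have "T = ext T x" using mx by blast
    moreover have "x \<in> ext T x" using ext_x[OF T0] .
    moreover have "x \<notin> T" using x ext_base by blast
    ultimately show False by blast
  qed
  then show ?thesis using Ts by blast
qed

lemma twist_notin: assumes T: "is_subspace T" and x: "(x::'a) \<notin> T" and z: "z \<notin> ext T x"
  shows "z \<notin> ext T (x + nsmul k z)"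
proof
  assume "z \<in> ext T (x + nsmul k z)"
  then obtain t m where tm: "t \<in> T" "z = t + nsmul m (x + nsmul k z)" unfolding ext_iff by blast
  define y where "y = x + nsmul k z"
  have T0: "0 \<in> T" using T is_subspace_def by blast
  have Tz: "is_subspace (ext T z)" "T \<subseteq> ext T z" "z \<in> ext T z"
    using ext_sub[OF T] ext_base ext_x[OF T0] by auto
  have Tx: "is_subspace (ext T x)" "T \<subseteq> ext T x" "x \<in> ext T x"
    using ext_sub[OF T] ext_base ext_x[OF T0] by auto
  show False
  proof (cases "p dvd m")
    case True
    then have "z = t" using tm nsmul_dvd by simp
    then show False using tm z Tx by blast
  next
    case False
    obtain j where j: "nsmul j (nsmul m y) = y" using nsmul_inv[OF False] by blast
    have "nsmul m y = z - t" using tm(2) y_def by (metis add_diff_cancel_left')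
    then have "nsmul m y \<in> ext T z" using subspace_diff[OF Tz(1)] Tz tm by auto
    then have "y \<in> ext T z" using j nsmul_mem[OF Tz(1)] by metis
    moreover have "nsmul k z \<in> ext T z" using nsmul_mem[OF Tz(1) Tz(3)] .
    ultimately have "y - nsmul k z \<in> ext T z" using subspace_diff[OF Tz(1)] by blast
    then have "x \<in> ext T z" using y_def by simp
    then obtain t' i where ti: "t' \<in> T" "x = t' + nsmul i z" unfolding ext_iff by blast
    then have e: "nsmul i z = x - t'" by simp
    have "x - t' \<in> ext T x" using subspace_diff[OF Tx(1) Tx(3)] Tx(2) ti(1) by blast
    then have "nsmul i z \<in> ext T x" unfolding e .
    then have "p dvd i" using nsmul_notin[OF Tx(1) z] by blast
    then have "x = t'" using ti nsmul_dvd by simp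
    then show False using ti x by blast
  qed
qed

lemma ext2_facts: assumes "is_subspace T"
  shows "is_subspace (ext (ext T a) b)" "T \<subseteq> ext (ext T a) b" "a \<in> ext (ext T a) (b::'a)"
    "b \<in> ext (ext T a) b"
proof -
  have T0: "0 \<in> T" using assms is_subspace_def by blast
  show "is_subspace (ext (ext T a) b)" using ext_sub assms by blast
  show "T \<subseteq> ext (ext T a) b" using ext_base by blast
  show "a \<in> ext (ext T a) b" using ext_x[OF T0, of a] ext_base by blast
  have "0 \<in> ext T a" using T0 ext_base by blast
  then show "b \<in> ext (ext T a) b" using ext_x by blast
qed

lemma twist_span: assumes T: "is_subspace T"
  shows "ext (ext T (x + nsmul k z)) z = ext (ext T x) (z::'a)"
proof
  note R = ext2_facts[OF T, where a = x and b = z]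
  have "x + nsmul k z \<in> ext (ext T x) z" using R nsmul_mem[OF R(1) R(4)]
    unfolding is_subspace_def by blast
  then show "ext (ext T (x + nsmul k z)) z \<subseteq> ext (ext T x) z"
    using ext_least2[OF R(1) R(2)] R by blast
next
  note L = ext2_facts[OF T, where a = "x + nsmul k z" and b = z]
  have "(x + nsmul k z) - nsmul k z \<in> ext (ext T (x + nsmul k z)) z"
    using subspace_diff[OF L(1) L(3) nsmul_mem[OF L(1) L(4)]] .
  then have "x \<in> ext (ext T (x + nsmul k z)) z" by simp
  then show "ext (ext T x) z \<subseteq> ext (ext T (x + nsmul k z)) z"
    using ext_least2[OF L(1) L(2)] L by blast
qed

lemma twist_inj: assumes T: "is_subspace T" and z: "z \<notin> ext T (x + nsmul k z)"
  and k: "k < p" "k' < p" and eq: "ext T (x + nsmul k z) = ext T (x + nsmul k' (z::'a))"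
  shows "k = k'"
proof -
  have T0: "0 \<in> T" using T is_subspace_def by blast
  let ?U = "ext T (x + nsmul k z)"
  have U: "is_subspace ?U" using ext_sub[OF T] .
  have "x + nsmul k z \<in> ?U" "x + nsmul k' z \<in> ?U" using ext_x[OF T0] eq by metis+
  then have "(x + nsmul k z) - (x + nsmul k' z) \<in> ?U" using subspace_diff[OF U] by blast
  then have "nsmul k z - nsmul k' z \<in> ?U" by simp
  then show ?thesis using diff_nsmul_in[OF U z k] by blast
qed

end



context fp begin

lemma twist_family:
  assumes S: "is_subspace S" and zS: "z \<in> S" and zann: "(z::'a) \<in> ann"
    and H: "is_subspace H" and x0H: "x0 \<notin> H" and S0: "ext (ext H x0) z = S" and zS0: "z \<notin> ext H x0"
    and D: "is_subspace D" "ann \<subseteq> D" and x0D: "x0 \<notin> D"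
  shows "is_subspace (ext H (x0 + nsmul k z)) \<and> ext H (x0 + nsmul k z) \<subseteq> S
     \<and> \<not> ext H (x0 + nsmul k z) \<subseteq> D \<and> z \<notin> ext H (x0 + nsmul k z)
     \<and> zsel (ext H (x0 + nsmul k z)) = zsel S
     \<and> ext (ext H (x0 + nsmul k z)) z = S"
proof -
  let ?V = "ext H (x0 + nsmul k z)"
  have H0: "0 \<in> H" using H is_subspace_def by blast
  have sp: "ext ?V z = S" using twist_span[OF H] S0 by simp
  have V: "is_subspace ?V" using ext_sub[OF H] .
  have "?V \<subseteq> S" using sp ext_base by blast
  moreover have "\<not> ?V \<subseteq> D"
  proof
    assume "?V \<subseteq> D"
    then have "x0 + nsmul k z \<in> D" using ext_x[OF H0] by blast
    moreover have "nsmul k z \<in> D" using nsmul_mem[OF D(1)] zann D(2) by blast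
    ultimately have "(x0 + nsmul k z) - nsmul k z \<in> D" using subspace_diff[OF D(1)] by blast
    then show False using x0D by simp
  qed
  moreover have "z \<notin> ?V" using twist_notin[OF H x0H zS0] .
  moreover have "zsel ?V = zsel S" using zsel_ext[OF zann, of ?V] sp by simp
  ultimately show ?thesis using V sp by blast
qed

lemma fiber_one:
  fixes D C :: "'a set"
  assumes D: "is_subspace D" "ann \<subseteq> D" and C: "is_subspace C"
    and hz: "\<forall>S. is_subspace S \<and> \<not> S \<subseteq> ann \<longrightarrow> (\<exists>z\<in>prods S. z \<in> ann \<and> z \<noteq> (0::'a))"
  shows "p * card {S. is_subspace S \<and> S \<subseteq> C \<and> \<not> S \<subseteq> D \<and> zsel S \<in> S}
     \<le> card {S. is_subspace S \<and> S \<subseteq> C \<and> \<not> S \<subseteq> D \<and> zsel S \<notin> S}"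
proof (rule fiber_count[where f = "\<lambda>S'. ext S' (zsel S')"])
  show "finite {S. is_subspace S \<and> S \<subseteq> C \<and> \<not> S \<subseteq> D \<and> zsel S \<notin> S}" by (rule finite_subset[OF subset_UNIV]) simp
  show "finite {S. is_subspace S \<and> S \<subseteq> C \<and> \<not> S \<subseteq> D \<and> zsel S \<in> S}" by (rule finite_subset[OF subset_UNIV]) simp
  show "\<forall>S\<in>{S. is_subspace S \<and> S \<subseteq> C \<and> \<not> S \<subseteq> D \<and> zsel S \<in> S}.
     \<exists>K\<subseteq>{S' \<in> {S. is_subspace S \<and> S \<subseteq> C \<and> \<not> S \<subseteq> D \<and> zsel S \<notin> S}. ext S' (zsel S') = S}.
     p \<le> card K"
  proof
    fix S assume "S \<in> {S. is_subspace S \<and> S \<subseteq> C \<and> \<not> S \<subseteq> D \<and> zsel S \<in> S}"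
    then have S: "is_subspace S" "S \<subseteq> C" "\<not> S \<subseteq> D" "zsel S \<in> S" by auto
    define z where "z = zsel S"
    have "\<not> S \<subseteq> ann" using S(3) D(2) by blast
    then have "\<exists>z\<in>prods S. z \<in> ann \<and> z \<noteq> 0" using hz S(1) by blast
    then have "zsel S \<in> ann \<and> zsel S \<noteq> 0" using zsel_prop by blast
    then have zp: "z \<in> ann" "z \<noteq> 0" using z_def by auto
    obtain S0 where S0: "is_subspace S0" "S0 \<subseteq> S" "z \<notin> S0" "ext S0 z = S"
      using complement[OF S(1) _ zp(2)] S(4) z_def by blast
    have "\<not> S0 \<subseteq> D"
    proof
      assume "S0 \<subseteq> D"
      then have "ext S0 z \<subseteq> D" using ext_least[OF D(1)] zp D(2) by blast
      then show False using S0(4) S(3) by simp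
    qed
    then obtain x0 where x0: "x0 \<in> S0" "x0 \<notin> D" by blast
    have "x0 \<noteq> 0" using x0 D(1) is_subspace_def by blast
    then obtain H where H: "is_subspace H" "H \<subseteq> S0" "x0 \<notin> H" "ext H x0 = S0"
      using complement[OF S0(1) x0(1)] by blast
    note fam = twist_family[OF S(1) S(4)[folded z_def] zp(1) H(1) H(3) _ _ D x0(2)]
    have F: "\<And>k. is_subspace (ext H (x0 + nsmul k z)) \<and> ext H (x0 + nsmul k z) \<subseteq> S
     \<and> \<not> ext H (x0 + nsmul k z) \<subseteq> D \<and> z \<notin> ext H (x0 + nsmul k z)
     \<and> zsel (ext H (x0 + nsmul k z)) = zsel S
     \<and> ext (ext H (x0 + nsmul k z)) z = S" using fam H(4) S0(3,4) by simp
    let ?K = "(\<lambda>k. ext H (x0 + nsmul k z)) ` {..<p}"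
    have "?K \<subseteq> {S' \<in> {S. is_subspace S \<and> S \<subseteq> C \<and> \<not> S \<subseteq> D \<and> zsel S \<notin> S}. ext S' (zsel S') = S}"
      using F S(2) z_def by auto
    moreover have "inj_on (\<lambda>k. ext H (x0 + nsmul k z)) {..<p}"
    proof (rule inj_onI)
      fix k k' assume kk: "k \<in> {..<p}" "k' \<in> {..<p}"
        and eq: "ext H (x0 + nsmul k z) = ext H (x0 + nsmul k' z)"
      have "z \<notin> ext H (x0 + nsmul k z)" using F by blast
      then show "k = k'" using twist_inj[OF H(1) _ _ _ eq] kk by blast
    qed
    then have "card ?K = p" by (simp add: card_image)
    ultimately show "\<exists>K\<subseteq>{S' \<in> {S. is_subspace S \<and> S \<subseteq> C \<and> \<not> S \<subseteq> D \<and> zsel S \<notin> S}. ext S' (zsel S') = S}.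
     p \<le> card K" by (intro exI[of _ ?K]) simp
  qed
qed


lemma fiber_two:
  fixes D C :: "'a set"
  assumes D: "is_subspace D" "ann \<subseteq> D" and C: "is_subspace C"
    and hz: "\<forall>S. is_subspace S \<and> \<not> S \<subseteq> ann \<longrightarrow> (\<exists>z\<in>prods S. z \<in> ann \<and> z \<noteq> (0::'a))"
  shows "p * p * card {S. is_subspace S \<and> S \<subseteq> C \<and> \<not> S \<subseteq> D \<and> zsel S \<in> S \<and> (\<exists>y\<in>S. y \<in> D \<and> y \<notin> ann)}
     \<le> card {S. is_subspace S \<and> S \<subseteq> C \<and> \<not> S \<subseteq> D \<and> zsel S \<notin> S}"
proof (rule fiber_count[where f = "\<lambda>S'. ext S' (zsel S')"])
  let ?X = "{S. is_subspace S \<and> S \<subseteq> C \<and> \<not> S \<subseteq> D \<and> zsel S \<notin> S}"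
  let ?Y = "{S. is_subspace S \<and> S \<subseteq> C \<and> \<not> S \<subseteq> D \<and> zsel S \<in> S \<and> (\<exists>y\<in>S. y \<in> D \<and> y \<notin> ann)}"
  show "finite ?X" by (rule finite_subset[OF subset_UNIV]) simp
  show "finite ?Y" by (rule finite_subset[OF subset_UNIV]) simp
  show "\<forall>S\<in>?Y. \<exists>K\<subseteq>{S' \<in> ?X. ext S' (zsel S') = S}. p * p \<le> card K"
  proof
    fix S assume "S \<in> ?Y"
    then have S: "is_subspace S" "S \<subseteq> C" "\<not> S \<subseteq> D" "zsel S \<in> S" "\<exists>y\<in>S. y \<in> D \<and> y \<notin> ann" by auto
    define z where "z = zsel S"
    have "\<not> S \<subseteq> ann" using S(3) D(2) by blast
    then have "\<exists>z\<in>prods S. z \<in> ann \<and> z \<noteq> 0" using hz S(1) by blast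
    then have "zsel S \<in> ann \<and> zsel S \<noteq> 0" using zsel_prop by blast
    then have zp: "z \<in> ann" "z \<noteq> 0" using z_def by auto
    have zD: "z \<in> D" using zp D(2) by blast
    obtain S0 where S0: "is_subspace S0" "S0 \<subseteq> S" "z \<notin> S0" "ext S0 z = S"
      using complement[OF S(1) _ zp(2)] S(4) z_def by blast
    have "\<not> S0 \<subseteq> D"
    proof
      assume "S0 \<subseteq> D"
      then have "ext S0 z \<subseteq> D" using ext_least[OF D(1)] zp D(2) by blast
      then show False using S0(4) S(3) by simp
    qed
    then obtain x0 where x0: "x0 \<in> S0" "x0 \<notin> D" by blast
    have "x0 \<noteq> 0" using x0 D(1) is_subspace_def by blast
    then obtain T1 where T1: "is_subspace T1" "T1 \<subseteq> S0" "x0 \<notin> T1" "ext T1 x0 = S0"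
      using complement[OF S0(1) x0(1)] by blast
    have "\<exists>y0\<in>T1. y0 \<noteq> 0"
    proof (rule ccontr)
      assume "\<not> (\<exists>y0\<in>T1. y0 \<noteq> 0)"
      then have T10: "\<forall>t\<in>T1. t = 0" by blast
      obtain y where y: "y \<in> S" "y \<in> D" "y \<notin> ann" using S(5) by blast
      have "y \<in> ext (ext T1 x0) z" using y S0(4) T1(4) by simp
      then obtain t i j where tij: "t \<in> T1" "y = t + nsmul i x0 + nsmul j z" unfolding ext2_iff by blast
      then have yy: "y = nsmul i x0 + nsmul j z" using T10 by simp
      then have "nsmul i x0 = y - nsmul j z" by simp
      moreover have "y - nsmul j z \<in> D" using subspace_diff[OF D(1) y(2) nsmul_mem[OF D(1) zD]] .
      ultimately have "p dvd i" using nsmul_notin[OF D(1) x0(2)] by simp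
      then have "y = nsmul j z" using yy nsmul_dvd by simp
      then have "y \<in> ann" using nsmul_mem[OF ann_sub zp(1)] by simp
      then show False using y by blast
    qed
    then obtain y0 where y0: "y0 \<in> T1" "y0 \<noteq> 0" by blast
    then obtain H where H: "is_subspace H" "H \<subseteq> T1" "y0 \<notin> H" "ext H y0 = T1"
      using complement[OF T1(1) y0(1)] by blast
    have H0: "0 \<in> H" using H(1) is_subspace_def by blast
    have HX: "is_subspace (ext H x0)" using ext_sub[OF H(1)] .
    have S0e: "ext (ext H x0) y0 = S0" using ext_comm H(4) T1(4) by metis
    have A1: "y0 \<notin> ext H x0"
    proof
      assume "y0 \<in> ext H x0"
      then obtain h i where hi: "h \<in> H" "y0 = h + nsmul i x0" unfolding ext_iff by blast
      then have "nsmul i x0 = y0 - h" by simp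
      moreover have "y0 - h \<in> T1" using subspace_diff[OF T1(1) y0(1)] hi(1) H(2) by blast
      ultimately have "p dvd i" using nsmul_notin[OF T1(1) T1(3)] by simp
      then have "y0 = h" using hi nsmul_dvd by simp
      then show False using hi H(3) by blast
    qed
    have A2: "z \<notin> ext (ext H x0) y0" using S0e S0(3) by simp
    have B1: "z \<notin> ext (ext H x0) (y0 + nsmul l z)" for l
      using twist_notin[OF HX A1 A2] .
    have B1': "ext (ext (ext H x0) (y0 + nsmul l z)) z = S" for l
      using twist_span[OF HX] S0e S0(4) by simp
    have B2: "x0 \<notin> ext H (y0 + nsmul l z)" for l
    proof
      assume "x0 \<in> ext H (y0 + nsmul l z)"
      then obtain h m where hm: "h \<in> H" "x0 = h + nsmul m (y0 + nsmul l z)" unfolding ext_iff by blast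
      then have e1: "x0 = h + nsmul m y0 + nsmul (m * l) z" by (simp add: nsmul_plus nsmul_mult add.assoc)
      then have e2: "nsmul (m * l) z = x0 - (h + nsmul m y0)" by simp
      have "h + nsmul m y0 \<in> T1" using hm(1) H(2) nsmul_mem[OF T1(1) y0(1)] T1(1) is_subspace_def by blast
      then have "h + nsmul m y0 \<in> S0" using T1(2) by blast
      then have "x0 - (h + nsmul m y0) \<in> S0" using subspace_diff[OF S0(1) x0(1)] by blast
      then have "p dvd (m * l)" using nsmul_notin[OF S0(1) S0(3)] e2 by simp
      then have "x0 = h + nsmul m y0" using e1 nsmul_dvd by simp
      then have "x0 \<in> ext H y0" using ext_memI[OF hm(1)] by simp
      then show False using H(4) T1(3) by simp
    qed
    have F: "is_subspace (ext (ext H (y0 + nsmul l z)) (x0 + nsmul k z))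
       \<and> ext (ext H (y0 + nsmul l z)) (x0 + nsmul k z) \<subseteq> S
       \<and> \<not> ext (ext H (y0 + nsmul l z)) (x0 + nsmul k z) \<subseteq> D
       \<and> z \<notin> ext (ext H (y0 + nsmul l z)) (x0 + nsmul k z)
       \<and> zsel (ext (ext H (y0 + nsmul l z)) (x0 + nsmul k z)) = zsel S
       \<and> ext (ext (ext H (y0 + nsmul l z)) (x0 + nsmul k z)) z = S" for k l
    proof -
      have W: "is_subspace (ext H (y0 + nsmul l z))" using ext_sub[OF H(1)] .
      have e: "ext (ext H (y0 + nsmul l z)) x0 = ext (ext H x0) (y0 + nsmul l z)" using ext_comm by metis
      show ?thesis using twist_family[OF S(1) S(4)[folded z_def] zp(1) W B2 _ _ D x0(2), of k]
        e B1 B1' by simp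
    qed
    let ?f = "\<lambda>(k, l). ext (ext H (y0 + nsmul l z)) (x0 + nsmul k z)"
    let ?K = "?f ` ({..<p} \<times> {..<p})"
    have "?K \<subseteq> {S' \<in> ?X. ext S' (zsel S') = S}"
    proof (rule image_subsetI)
      fix a assume "a \<in> {..<p} \<times> {..<p}"
      obtain k l where a: "a = (k, l)" by (cases a)
      have Fa: "is_subspace (?f a)" "?f a \<subseteq> S" "\<not> ?f a \<subseteq> D" "zsel (?f a) \<notin> ?f a"
        "ext (?f a) (zsel (?f a)) = S" using F[of l k] a z_def by auto
      have "?f a \<subseteq> C" using Fa(2) S(2) by blast
      then show "?f a \<in> {S' \<in> ?X. ext S' (zsel S') = S}" using Fa by blast
    qed
    moreover have "inj_on ?f ({..<p} \<times> {..<p})"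
    proof (rule inj_onI)
      fix a b assume ab: "a \<in> {..<p} \<times> {..<p}" "b \<in> {..<p} \<times> {..<p}" and eq: "?f a = ?f b"
      obtain k l where a: "a = (k, l)" by (cases a)
      obtain k' l' where b: "b = (k', l')" by (cases b)
      let ?V = "ext (ext H (y0 + nsmul l z)) (x0 + nsmul k z)"
      have eqV: "?V = ext (ext H (y0 + nsmul l' z)) (x0 + nsmul k' z)" using eq a b by simp
      have V: "is_subspace ?V" "z \<notin> ?V" using F by blast+
      have m1: "x0 + nsmul k z \<in> ?V" "y0 + nsmul l z \<in> ?V"
        using ext2_facts[OF H(1), where a = "y0 + nsmul l z" and b = "x0 + nsmul k z"] by blast+
      have m2: "x0 + nsmul k' z \<in> ?V" "y0 + nsmul l' z \<in> ?V"
        using ext2_facts[OF H(1), where a = "y0 + nsmul l' z" and b = "x0 + nsmul k' z"] eqV by simp_all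
      have "(x0 + nsmul k z) - (x0 + nsmul k' z) \<in> ?V" using subspace_diff[OF V(1) m1(1) m2(1)] .
      then have "nsmul k z - nsmul k' z \<in> ?V" by simp
      then have "k = k'" using diff_nsmul_in[OF V] ab a b by auto
      have "(y0 + nsmul l z) - (y0 + nsmul l' z) \<in> ?V" using subspace_diff[OF V(1) m1(2) m2(2)] .
      then have "nsmul l z - nsmul l' z \<in> ?V" by simp
      then have "l = l'" using diff_nsmul_in[OF V] ab a b by auto
      show "a = b" using a b \<open>k = k'\<close> \<open>l = l'\<close> by simp
    qed
    then have "card ?K = p * p" by (simp add: card_image card_cartesian_product)
    ultimately show "\<exists>K\<subseteq>{S' \<in> ?X. ext S' (zsel S') = S}. p * p \<le> card K"
      by (intro exI[of _ ?K]) simp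
  qed
qed

end



context fp begin

definition G :: "'a set \<Rightarrow> 'a \<Rightarrow> 'a set set" where
  "G W v = {S. is_subspace S \<and> \<not> S \<subseteq> W \<and> S \<subseteq> ext W v \<and> (\<exists>c\<in>W. v + c \<in> S)}"

lemma ext_inter: fixes W :: "'a set" assumes W: "is_subspace W" and v: "v \<notin> W" and P: "is_subspace P" "P \<subseteq> W"
  and c: "c \<in> W" shows "ext P (v + c) \<inter> W = P"
proof
  show "P \<subseteq> ext P (v + c) \<inter> W" using ext_base P by blast
  show "ext P (v + c) \<inter> W \<subseteq> P"
  proof
    fix y assume y: "y \<in> ext P (v + c) \<inter> W"
    then have "y \<in> ext P (v + c)" by blast
    then obtain t m where tm: "t \<in> P" "y = t + nsmul m (v + c)" unfolding ext_iff by blast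
    have e: "nsmul m v = y - t - nsmul m c" using tm by (simp add: nsmul_plus)
    have "y - t - nsmul m c \<in> W" using y tm P nsmul_mem[OF W c] subspace_diff[OF W] by blast
    then have "p dvd m" using nsmul_notin[OF W v] e by simp
    then have "y = t" using tm nsmul_dvd by simp
    then show "y \<in> P" using tm by simp
  qed
qed

lemma ext_count:
  fixes W :: "'a set" and Pf :: "'i \<Rightarrow> 'a set"
  assumes W: "is_subspace W" and v: "v \<notin> W" and I: "finite I"
    and PI: "\<forall>i\<in>I. is_subspace (Pf i) \<and> Pf i \<subseteq> W \<and> cf i \<in> W"
    and inj: "\<forall>i\<in>I. \<forall>j\<in>I. Pf i = Pf j \<and> cf i - cf j \<in> Pf i \<longrightarrow> i = j"
  shows "card I \<le> card (G W v)"
proof -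
  let ?g = "\<lambda>i. ext (Pf i) (v + cf i)"
  have W0: "0 \<in> W" using W is_subspace_def by blast
  have EW: "is_subspace (ext W v)" "W \<subseteq> ext W v" "v \<in> ext W v"
    using ext_sub[OF W] ext_base[of W v] ext_x[OF W0, of v] by auto
  have mem: "v + cf i \<in> ?g i" if "i \<in> I" for i
  proof -
    have "0 \<in> Pf i" using PI that is_subspace_def by blast
    then show ?thesis by (rule ext_x)
  qed
  have gi: "?g i \<inter> W = Pf i" if "i \<in> I" for i
    using ext_inter[OF W v] PI that by blast
  have "inj_on ?g I"
  proof (rule inj_onI)
    fix i j assume ij: "i \<in> I" "j \<in> I" and eq: "?g i = ?g j"
    have PP: "Pf i = Pf j" using gi[OF ij(1)] gi[OF ij(2)] eq by simp
    have Gi: "is_subspace (?g i)" using ext_sub PI ij by blast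
    have m2: "v + cf j \<in> ?g i" using mem[OF ij(2)] eq by simp
    have "(v + cf i) - (v + cf j) \<in> ?g i" using subspace_diff[OF Gi mem[OF ij(1)] m2] .
    moreover have "(v + cf i) - (v + cf j) \<in> W" using subspace_diff[OF W] PI ij by simp
    ultimately have "(v + cf i) - (v + cf j) \<in> Pf i" using gi[OF ij(1)] by blast
    then have "cf i - cf j \<in> Pf i" by simp
    then show "i = j" using inj ij PP by blast
  qed
  moreover have "?g ` I \<subseteq> G W v"
  proof
    fix S assume "S \<in> ?g ` I"
    then obtain i where i: "i \<in> I" "S = ?g i" by blast
    have ci: "cf i \<in> W" "is_subspace (Pf i)" "Pf i \<subseteq> W" using PI i by auto
    have "is_subspace S" using ext_sub[OF ci(2)] i by simp
    moreover have "\<not> S \<subseteq> W"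
    proof
      assume "S \<subseteq> W"
      then have "v + cf i \<in> W" using mem i by blast
      then have "(v + cf i) - cf i \<in> W" using subspace_diff[OF W _ ci(1)] by blast
      then show False using v by simp
    qed
    moreover have "S \<subseteq> ext W v"
    proof -
      have "cf i \<in> ext W v" using ci(1) EW(2) by blast
      then have "v + cf i \<in> ext W v" using EW(1,3) unfolding is_subspace_def by blast
      moreover have "Pf i \<subseteq> ext W v" using ci(3) EW(2) by blast
      ultimately show ?thesis using ext_least[OF EW(1)] i by blast
    qed
    moreover have "\<exists>c\<in>W. v + c \<in> S" using mem[OF i(1)] ci(1) i(2) by blast
    ultimately show "S \<in> G W v" unfolding G_def by blast
  qed
  moreover have "finite (G W v)" by (rule finite_subset[OF subset_UNIV]) simp
  ultimately show ?thesis using card_inj_on_le by blast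
qed

lemma G_disjoint: assumes W: "is_subspace W" and v2: "v2 \<notin> ext W v1"
  shows "G W v1 \<inter> G W v2 = {}"
proof -
  have False if S1: "S \<in> G W v1" and S2: "S \<in> G W v2" for S
  proof -
    obtain c where c: "c \<in> W" "v2 + c \<in> S" using S2 unfolding G_def by blast
    have Sv: "S \<subseteq> ext W v1" using S1 unfolding G_def by blast
    have E: "is_subspace (ext W v1)" using ext_sub[OF W] .
    have "(v2 + c) - c \<in> ext W v1" using subspace_diff[OF E] c Sv ext_base by blast
    then show False using v2 by simp
  qed
  then show ?thesis by blast
qed

lemma G_sub: "G W v \<subseteq> {S. is_subspace S \<and> \<not> S \<subseteq> W}" unfolding G_def by blast

lemma lines_bound: assumes W: "is_subspace (W::'a set)"
  shows "card W \<le> p * card {S. is_subspace S \<and> S \<subseteq> W}"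
proof -
  let ?L = "(\<lambda>x. ext {0} x) ` W"
  have L: "?L \<subseteq> {S. is_subspace S \<and> S \<subseteq> W}"
  proof
    fix l assume "l \<in> ?L"
    then obtain x where x: "x \<in> W" "l = ext {0} x" by blast
    have "is_subspace l" using ext_sub[OF zero_sub] x by simp
    have "{0} \<subseteq> W" using W is_subspace_def by blast
    then have "l \<subseteq> W" using ext_least[OF W _ x(1)] x(2) by blast
    then show "l \<in> {S. is_subspace S \<and> S \<subseteq> W}" using \<open>is_subspace l\<close> by blast
  qed
  have cl: "card l \<le> p" if "l \<in> ?L" for l
  proof -
    obtain x where x: "l = ext {0} x" using \<open>l \<in> ?L\<close> by blast
    have "l \<subseteq> (\<lambda>k. nsmul k x) ` {..<p}"
    proof
      fix y assume "y \<in> l"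
      then have "y \<in> ext {0} x" using x by simp
      then obtain s k where "s \<in> {0}" "y = s + nsmul k x" unfolding ext_iff by blast
      then have "y = nsmul k x" by simp
      then have "y = nsmul (k mod p) x" using nsmul_mod by simp
      moreover have "k mod p < p" using p_pos by simp
      ultimately show "y \<in> (\<lambda>k. nsmul k x) ` {..<p}" by blast
    qed
    then have "card l \<le> card ((\<lambda>k. nsmul k x) ` {..<p})" by (intro card_mono) auto
    also have "\<dots> \<le> p" using card_image_le[of "{..<p}"] by simp
    finally show ?thesis .
  qed
  have "W \<subseteq> \<Union> ?L"
  proof
    fix x assume "x \<in> W"
    moreover have "x \<in> ext {0} x" by (rule ext_x) simp
    ultimately show "x \<in> \<Union> ?L" by blast
  qed
  then have "card W \<le> card (\<Union> ?L)" by (intro card_mono) auto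
  also have "\<dots> \<le> sum card ?L" by (rule card_Union_le_sum_card)
  also have "\<dots> \<le> sum (\<lambda>_. p) ?L" by (rule sum_mono) (use cl in blast)
  also have "\<dots> = p * card ?L" by (simp add: mult.commute)
  also have "\<dots> \<le> p * card {S. is_subspace S \<and> S \<subseteq> W}"
    using L by (intro mult_le_mono2 card_mono) simp_all
  finally show ?thesis .
qed

end



lemma arith1: fixes p a x y s i :: nat
  assumes "i \<le> a + y" "p*y \<le> x" "p*(a - 1) \<le> x + y" "s = a + x + y" "p*p \<le> s" "a \<ge> 1"
  shows "p * i \<le> 2 * s"
proof -
  have "p * i \<le> p * a + p * y" using assms(1) by (metis add_mult_distrib2 mult_le_mono2)
  moreover have "p * a \<le> a + x + y + a"
  proof (cases "a \<le> p")
    case True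
    then have "p * a \<le> p * p" by simp
    then show ?thesis using assms by linarith
  next
    case False
    have "p * a = p * (a - 1) + p" using assms(6) by (metis add.commute mult.right_neutral
          add_mult_distrib2 le_add_diff_inverse)
    then show ?thesis using assms False by linarith
  qed
  ultimately show ?thesis using assms by linarith
qed

lemma arith2: fixes p a t1 x1 y1 t2 x2 y2 i c s :: nat
  assumes "i \<le> a + y1 + y2" "p*y1 \<le> x1" "x1 + y1 = t1" "p*p*y2 \<le> x2" "x2 \<le> t2"
    "c = p*p*(a-1) + p*t1" "a \<ge> 2" "2*c \<le> t2 \<or> (c \<le> t2 \<and> p*p \<le> a + t1)" "s = a + t1 + t2"
  shows "p * p * i \<le> 2 * s"
proof -
  have "p*p*i \<le> p*p*a + p*p*y1 + p*p*y2" using assms(1)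
    by (metis add_mult_distrib2 mult_le_mono2)
  moreover have "p*p*y1 \<le> p*t1"
  proof -
    have "p*y1 \<le> t1" using assms(2,3) by linarith
    then have "p*(p*y1) \<le> p*t1" by simp
    then show ?thesis by (simp add: mult.assoc)
  qed
  moreover have e: "p*p*a = p*p*(a-1) + p*p" using assms(7)
    by (metis add.commute add_mult_distrib2 le_add_diff_inverse mult.right_neutral one_le_numeral
        order_trans)
  moreover have "p*p \<le> p*p*(a-1)"
  proof -
    have "1 \<le> a - 1" using assms(7) by linarith
    then show ?thesis by (metis mult.right_neutral mult_le_mono2)
  qed
  ultimately show ?thesis using assms by linarith
qed

lemma UNIV_sub: "is_subspace UNIV" unfolding is_subspace_def by simp

context fp begin

lemma part1:
  assumes prod3: "\<And>a b c::'a. a*(b*c) = 0" and nz: "a0 * b0 \<noteq> (0::'a)"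
    and cardU: "card (UNIV::'a set) = p^n" and n3: "3 \<le> n"
  shows "p * card {I::'a set. is_ideal I} \<le> 2 * card {S::'a set. is_subspace S}"
proof -
  define SB where "SB = {S::'a set. is_subspace S \<and> S \<subseteq> ann}"
  define X where "X = {S::'a set. is_subspace S \<and> S \<subseteq> UNIV \<and> \<not> S \<subseteq> ann \<and> zsel S \<notin> S}"
  define Y where "Y = {S::'a set. is_subspace S \<and> S \<subseteq> UNIV \<and> \<not> S \<subseteq> ann \<and> zsel S \<in> S}"
  have fin: "finite (A::'a set set)" for A by (rule finite_subset[OF subset_UNIV]) simp
  have hz: "\<forall>S. is_subspace S \<and> \<not> S \<subseteq> ann \<longrightarrow> (\<exists>z\<in>prods S. z \<in> ann \<and> z \<noteq> (0::'a))"
  proof (intro allI impI)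
    fix S :: "'a set" assume "is_subspace S \<and> \<not> S \<subseteq> ann"
    then obtain x where x: "x \<in> S" "x \<notin> ann" by blast
    then obtain c where c: "c * x \<noteq> 0" unfolding ann_def by blast
    have "c * x \<in> prods S" using x(1) unfolding prods_def by blast
    moreover have "c * x \<in> ann" unfolding ann_def using prod3 by blast
    ultimately show "\<exists>z\<in>prods S. z \<in> ann \<and> z \<noteq> 0" using c by blast
  qed
  have fib: "p * card Y \<le> card X" unfolding X_def Y_def
    using fiber_one[OF ann_sub order_refl UNIV_sub hz] .
  have part: "{S::'a set. is_subspace S} = SB \<union> (X \<union> Y)" unfolding SB_def X_def Y_def by blast
  have s_eq: "card {S::'a set. is_subspace S} = card SB + (card X + card Y)"
  proof -
    have d1: "SB \<inter> (X \<union> Y) = {}" unfolding SB_def X_def Y_def by blast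
    have d2: "X \<inter> Y = {}" unfolding X_def Y_def by blast
    show ?thesis unfolding part card_Un_disjoint[OF fin fin d1] card_Un_disjoint[OF fin fin d2] ..
  qed
  have "{I::'a set. is_ideal I} \<subseteq> SB \<union> Y"
  proof
    fix I :: "'a set" assume "I \<in> {I. is_ideal I}"
    then have I: "is_ideal I" by simp
    then have Is: "is_subspace I" unfolding is_ideal_def by blast
    show "I \<in> SB \<union> Y"
    proof (cases "I \<subseteq> ann")
      case True then show ?thesis using Is SB_def by blast
    next
      case False
      then have "\<exists>z\<in>prods I. z \<in> ann \<and> z \<noteq> 0" using hz Is by blast
      then have "zsel I \<in> prods I" using zsel_prop by blast
      then have "zsel I \<in> I" using ideal_prods[OF I] by blast
      then show ?thesis using Is False Y_def by blast
    qed
  qed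
  then have i_le: "card {I::'a set. is_ideal I} \<le> card SB + card Y"
    by (metis card_Un_le card_mono fin order_trans)
  have b0: "b0 \<notin> ann" using nz unfolding ann_def by blast
  define bs where "bs P = (SOME b. b \<in> ann \<and> b \<notin> P)" for P :: "'a set"
  define Sa where "Sa = SB - {ann}"
  have annSB: "ann \<in> SB" unfolding SB_def using ann_sub by blast
  have cSa: "card Sa = card SB - 1" unfolding Sa_def using annSB fin by simp
  have bsP: "bs P \<in> ann \<and> bs P \<notin> P" if "P \<in> Sa" for P
  proof -
    have "P \<subseteq> ann" "P \<noteq> ann" using that unfolding Sa_def SB_def by auto
    then have "\<exists>b. b \<in> ann \<and> b \<notin> P" by blast
    then show ?thesis unfolding bs_def by (rule someI_ex)
  qed
  have "card (Sa \<times> {..<p}) \<le> card (G ann b0)"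
  proof (rule ext_count[OF ann_sub b0, where Pf = fst and cf = "\<lambda>(P, k). nsmul k (bs P)"])
    show "finite (Sa \<times> {..<p})" using fin by simp
    show "\<forall>i\<in>Sa \<times> {..<p}. is_subspace (fst i) \<and> fst i \<subseteq> ann \<and> (case i of (P, k) \<Rightarrow> nsmul k (bs P)) \<in> ann"
      using bsP nsmul_mem[OF ann_sub] unfolding Sa_def SB_def by auto
    show "\<forall>i\<in>Sa \<times> {..<p}. \<forall>j\<in>Sa \<times> {..<p}. fst i = fst j \<and>
        (case i of (P, k) \<Rightarrow> nsmul k (bs P)) - (case j of (P, k) \<Rightarrow> nsmul k (bs P)) \<in> fst i \<longrightarrow> i = j"
    proof (intro ballI impI)
      fix i j assume ij: "i \<in> Sa \<times> {..<p}" "j \<in> Sa \<times> {..<p}" and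
        h: "fst i = fst j \<and> (case i of (P, k) \<Rightarrow> nsmul k (bs P)) - (case j of (P, k) \<Rightarrow> nsmul k (bs P)) \<in> fst i"
      obtain P k where i: "i = (P, k)" by (cases i)
      obtain P' k' where j: "j = (P', k')" by (cases j)
      have PP: "P' = P" using h i j by simp
      have d: "nsmul k (bs P) - nsmul k' (bs P) \<in> P" using h i j PP by simp
      have Ps: "is_subspace P" using ij i unfolding Sa_def SB_def by auto
      have "k = k'" using diff_nsmul_in[OF Ps _ _ _ d] bsP ij i j by auto
      then show "i = j" using i j PP by simp
    qed
  qed
  moreover have "G ann b0 \<subseteq> X \<union> Y" using G_sub unfolding X_def Y_def by blast
  then have "card (G ann b0) \<le> card X + card Y"
    by (metis card_Un_le card_mono fin order_trans)
  ultimately have lb: "p * (card SB - 1) \<le> card X + card Y" using cSa by (simp add: mult.commute)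
  have "p ^ n \<le> p * card {S::'a set. is_subspace S \<and> S \<subseteq> UNIV}"
    using lines_bound[OF UNIV_sub] cardU by simp
  then have "p ^ n \<le> p * card {S::'a set. is_subspace S}" by simp
  moreover have "p * (p * p) \<le> p ^ n"
  proof -
    have "p ^ 3 \<le> p ^ n" using n3 p_pos by (simp add: power_increasing)
    then show ?thesis by (simp add: power3_eq_cube)
  qed
  ultimately have "p * (p * p) \<le> p * card {S::'a set. is_subspace S}" by linarith
  then have "p * p \<le> card {S::'a set. is_subspace S}" using p_pos by simp
  moreover have "card SB \<ge> 1" using annSB fin by (metis card_0_eq empty_iff less_one not_le)
  ultimately show ?thesis using arith1[OF i_le fib _ _ _] lb s_eq by simp
qed

end



context fp begin

lemma part2:
  assumes prod4: "\<And>a b c d::'a. a*(b*(c*d)) = 0" and nz: "a0*(b0*c0) \<noteq> (0::'a)"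
    and cardU: "card (UNIV::'a set) = p^n" and n4: "4 \<le> n"
  shows "p * p * card {I::'a set. is_ideal I} \<le> 2 * card {S::'a set. is_subspace S}"
proof -
  have fin: "finite (A::'a set set)" for A by (rule finite_subset[OF subset_UNIV]) simp
  have finA: "finite (A::'a set)" for A by (rule finite_subset[OF subset_UNIV]) simp
  define B2 where "B2 = {x::'a. \<forall>a. a * x \<in> ann}"
  have B2sub: "is_subspace B2"
  proof -
    have A: "0 \<in> ann" "\<And>x y. x \<in> ann \<Longrightarrow> y \<in> ann \<Longrightarrow> x + y \<in> ann" "\<And>x. x \<in> ann \<Longrightarrow> - x \<in> ann"
      using ann_sub unfolding is_subspace_def by auto
    show ?thesis unfolding is_subspace_def B2_def
      using A by (auto simp: distrib_left)
  qed
  have annB2: "ann \<subseteq> B2" unfolding B2_def ann_def by auto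
  have prodB2: "a * b \<in> B2" for a b :: 'a unfolding B2_def ann_def using prod4 by blast
  have prodann: "a * (b * c) \<in> ann" for a b c :: 'a unfolding ann_def using prod4 by blast
  define w2 where "w2 = b0 * c0"
  have w2: "w2 \<in> B2" "w2 \<notin> ann" using prodB2 nz unfolding w2_def ann_def by auto
  have c0: "c0 \<notin> B2" using w2(2) unfolding B2_def w2_def by auto
  have ann0: "(ann::'a set) \<noteq> {0}" using prodann[of a0 b0 c0] nz by (metis singletonD)
  have hz: "\<forall>S. is_subspace S \<and> \<not> S \<subseteq> ann \<longrightarrow> (\<exists>z\<in>prods S. z \<in> ann \<and> z \<noteq> (0::'a))"
  proof (intro allI impI)
    fix S :: "'a set" assume "is_subspace S \<and> \<not> S \<subseteq> ann"
    then obtain x where x: "x \<in> S" "x \<notin> ann" by blast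
    then obtain c where c: "c * x \<noteq> 0" unfolding ann_def by blast
    show "\<exists>z\<in>prods S. z \<in> ann \<and> z \<noteq> 0"
    proof (cases "c * x \<in> ann")
      case True
      moreover have "c * x \<in> prods S" using x(1) unfolding prods_def by blast
      ultimately show ?thesis using c by blast
    next
      case False
      then obtain d where d: "d * (c * x) \<noteq> 0" unfolding ann_def by blast
      have "(d * c) * x \<in> prods S" using x(1) unfolding prods_def by blast
      then have "d * (c * x) \<in> prods S" by (simp add: mult.assoc)
      moreover have "d * (c * x) \<in> ann" using prodann by blast
      ultimately show ?thesis using d by blast
    qed
  qed
  define SB where "SB = {S::'a set. is_subspace S \<and> S \<subseteq> ann}"
  define X1 where "X1 = {S::'a set. is_subspace S \<and> S \<subseteq> B2 \<and> \<not> S \<subseteq> ann \<and> zsel S \<notin> S}"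
  define Y1 where "Y1 = {S::'a set. is_subspace S \<and> S \<subseteq> B2 \<and> \<not> S \<subseteq> ann \<and> zsel S \<in> S}"
  define X2 where "X2 = {S::'a set. is_subspace S \<and> S \<subseteq> UNIV \<and> \<not> S \<subseteq> B2 \<and> zsel S \<notin> S}"
  define Y2 where "Y2 = {S::'a set. is_subspace S \<and> S \<subseteq> UNIV \<and> \<not> S \<subseteq> B2 \<and> zsel S \<in> S
     \<and> (\<exists>y\<in>S. y \<in> B2 \<and> y \<notin> ann)}"
  define T1 where "T1 = {S::'a set. is_subspace S \<and> S \<subseteq> B2 \<and> \<not> S \<subseteq> ann}"
  define T2 where "T2 = {S::'a set. is_subspace S \<and> \<not> S \<subseteq> B2}"
  have fib1: "p * card Y1 \<le> card X1" unfolding X1_def Y1_def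
    using fiber_one[OF ann_sub order_refl B2sub hz] .
  have fib2: "p * p * card Y2 \<le> card X2" unfolding X2_def Y2_def
    using fiber_two[OF B2sub annB2 UNIV_sub hz] .
  have T1eq: "card X1 + card Y1 = card T1"
  proof -
    have "T1 = X1 \<union> Y1" "X1 \<inter> Y1 = {}" unfolding T1_def X1_def Y1_def by blast+
    then show ?thesis using card_Un_disjoint[OF fin fin] by simp
  qed
  have X2T2: "card X2 \<le> card T2" by (rule card_mono[OF fin]) (auto simp: X2_def T2_def)
  have s_eq: "card {S::'a set. is_subspace S} = card SB + card T1 + card T2"
  proof -
    have "{S::'a set. is_subspace S} = SB \<union> (T1 \<union> T2)" unfolding SB_def T1_def T2_def by blast
    moreover have "SB \<inter> (T1 \<union> T2) = {}" "T1 \<inter> T2 = {}" unfolding SB_def T1_def T2_def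
      using annB2 by blast+
    ultimately show ?thesis using card_Un_disjoint[OF fin fin] by simp
  qed
  have "{I::'a set. is_ideal I} \<subseteq> SB \<union> Y1 \<union> Y2"
  proof
    fix I :: "'a set" assume "I \<in> {I. is_ideal I}"
    then have I: "is_ideal I" by simp
    then have Is: "is_subspace I" unfolding is_ideal_def by blast
    show "I \<in> SB \<union> Y1 \<union> Y2"
    proof (cases "I \<subseteq> ann")
      case True then show ?thesis using Is SB_def by blast
    next
      case False
      then have "\<exists>z\<in>prods I. z \<in> ann \<and> z \<noteq> 0" using hz Is by blast
      then have "zsel I \<in> prods I" using zsel_prop by blast
      then have zI: "zsel I \<in> I" using ideal_prods[OF I] by blast
      show ?thesis
      proof (cases "I \<subseteq> B2")
        case True then show ?thesis using Is False zI Y1_def by blast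
      next
        case nB: False
        then obtain x where x: "x \<in> I" "x \<notin> B2" by blast
        then obtain c where c: "c * x \<notin> ann" unfolding B2_def by blast
        have "c * x \<in> I" using I x(1) unfolding is_ideal_def by blast
        then have "\<exists>y\<in>I. y \<in> B2 \<and> y \<notin> ann" using c prodB2 by blast
        then show ?thesis using Is nB zI Y2_def by blast
      qed
    qed
  qed
  then have i_le: "card {I::'a set. is_ideal I} \<le> card SB + card Y1 + card Y2"
    by (metis card_Un_le card_mono fin order_trans add_le_mono1)
  define Sa where "Sa = SB - {ann}"
  define Sb where "Sb = insert ann (T1 - {B2})"
  have annSB: "ann \<in> SB" unfolding SB_def using ann_sub by blast
  have B2T1: "B2 \<in> T1" unfolding T1_def using B2sub w2 by blast
  have cSa: "card Sa = card SB - 1" unfolding Sa_def using annSB fin by simp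
  have cSb: "card Sb = card T1"
  proof -
    have "ann \<notin> T1 - {B2}" unfolding T1_def by blast
    then have "card Sb = Suc (card (T1 - {B2}))" unfolding Sb_def using fin by simp
    moreover have "card T1 > 0" using B2T1 fin card_gt_0_iff by blast
    ultimately show ?thesis using B2T1 fin by simp
  qed
  have SaSb: "Sa \<inter> Sb = {}" unfolding Sa_def Sb_def SB_def T1_def by blast
  define bs where "bs P = (if P \<in> Sa then SOME b. b \<in> ann \<and> b \<notin> P else SOME b. b \<in> B2 \<and> b \<notin> P)"
    for P :: "'a set"
  have bsa: "bs P \<in> ann \<and> bs P \<notin> P" if "P \<in> Sa" for P
  proof -
    have "P \<subseteq> ann" "P \<noteq> ann" using that unfolding Sa_def SB_def by auto
    then have ex1: "\<exists>b. b \<in> ann \<and> b \<notin> P" by blast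
    have e: "bs P = (SOME b. b \<in> ann \<and> b \<notin> P)" unfolding bs_def using that by simp
    show ?thesis unfolding e by (rule someI_ex[OF ex1])
  qed
  have bsb: "bs P \<in> B2 \<and> bs P \<notin> P" if "P \<in> Sb" for P
  proof -
    have "P \<subseteq> B2" "P \<noteq> B2" using that annB2 w2 unfolding Sb_def T1_def by auto
    then have ex1: "\<exists>b. b \<in> B2 \<and> b \<notin> P" by blast
    have "P \<notin> Sa" using that SaSb by blast
    then have e: "bs P = (SOME b. b \<in> B2 \<and> b \<notin> P)" unfolding bs_def by simp
    show ?thesis unfolding e by (rule someI_ex[OF ex1])
  qed
  have Psub: "is_subspace P \<and> P \<subseteq> B2" if "P \<in> Sa \<union> Sb" for P
    using that annB2 ann_sub unfolding Sa_def Sb_def SB_def T1_def by auto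
  define I where "I = Sa \<times> ({..<p} \<times> {..<p}) \<union> Sb \<times> ({..<p} \<times> {0})"
  define cf where "cf = (\<lambda>(P, k, l). nsmul k (bs P) + nsmul l w2)"
  have cI: "card I = p * p * (card SB - 1) + p * card T1"
  proof -
    have "card I = card (Sa \<times> ({..<p} \<times> {..<p})) + card (Sb \<times> ({..<p} \<times> {0::nat}))"
      unfolding I_def by (rule card_Un_disjoint) (use SaSb fin in auto)
    then show ?thesis using cSa cSb by (simp add: card_cartesian_product mult.commute mult.left_commute)
  qed
  have ext_I: "card I \<le> card (G B2 v)" if v: "v \<notin> B2" for v
  proof (rule ext_count[OF B2sub v, where Pf = fst and cf = cf])
    show "finite I" unfolding I_def using fin by simp
    show "\<forall>i\<in>I. is_subspace (fst i) \<and> fst i \<subseteq> B2 \<and> cf i \<in> B2"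
    proof
      fix i assume "i \<in> I"
      then obtain P k l where i: "i = (P, k, l)" "P \<in> Sa \<union> Sb" unfolding I_def by auto
      have "bs P \<in> B2" using bsa bsb i annB2 by blast
      then have "cf i \<in> B2" unfolding cf_def i
        using nsmul_mem[OF B2sub] w2(1) B2sub unfolding is_subspace_def by auto
      then show "is_subspace (fst i) \<and> fst i \<subseteq> B2 \<and> cf i \<in> B2" using Psub i by simp
    qed
    show "\<forall>i\<in>I. \<forall>j\<in>I. fst i = fst j \<and> cf i - cf j \<in> fst i \<longrightarrow> i = j"
    proof (intro ballI impI)
      fix i j assume ij: "i \<in> I" "j \<in> I" and h: "fst i = fst j \<and> cf i - cf j \<in> fst i"
      obtain P k l where i: "i = (P, k, l)" by (cases i)
      obtain P' k' l' where j: "j = (P', k', l')" by (cases j)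
      have PP: "P' = P" using h i j by simp
      have d: "(nsmul k (bs P) + nsmul l w2) - (nsmul k' (bs P) + nsmul l' w2) \<in> P"
        using h i j PP unfolding cf_def by simp
      have Ps: "is_subspace P" using Psub ij i unfolding I_def by auto
      show "i = j"
      proof (cases "P \<in> Sa")
        case True
        have kl: "k < p" "l < p" "k' < p" "l' < p" using ij i j PP True SaSb unfolding I_def by auto
        have b: "bs P \<in> ann" "bs P \<notin> P" using bsa[OF True] by auto
        have Pann: "P \<subseteq> ann" using True unfolding Sa_def SB_def by auto
        define e1 where "e1 = nsmul k (bs P) - nsmul k' (bs P)"
        define e2 where "e2 = nsmul l w2 - nsmul l' w2"
        have de: "(nsmul k (bs P) + nsmul l w2) - (nsmul k' (bs P) + nsmul l' w2) = e1 + e2"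
          unfolding e1_def e2_def by (simp add: algebra_simps)
        have e1a: "e1 \<in> ann" unfolding e1_def
          using subspace_diff[OF ann_sub] nsmul_mem[OF ann_sub b(1)] by blast
        have "e1 + e2 \<in> ann" using d de Pann by auto
        then have "(e1 + e2) - e1 \<in> ann" using subspace_diff[OF ann_sub _ e1a] by blast
        then have "e2 \<in> ann" by simp
        then have "l = l'" using diff_nsmul_in[OF ann_sub w2(2) kl(2) kl(4)] unfolding e2_def by blast
        then have "e1 \<in> P" using d de unfolding e2_def by simp
        then have "k = k'" using diff_nsmul_in[OF Ps b(2) kl(1) kl(3)] unfolding e1_def by blast
        then show ?thesis using i j PP \<open>l = l'\<close> by simp
      next
        case False
        then have kl: "k < p" "k' < p" "l = 0" "l' = 0" "P \<in> Sb" using ij i j PP unfolding I_def by auto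
        have b: "bs P \<notin> P" using bsb[OF kl(5)] by auto
        have "nsmul k (bs P) - nsmul k' (bs P) \<in> P" using d kl by simp
        then have "k = k'" using diff_nsmul_in[OF Ps b kl(1) kl(2)] by blast
        then show ?thesis using i j PP kl by simp
      qed
    qed
  qed
  have GT2: "G B2 v \<subseteq> T2" for v using G_sub unfolding T2_def by blast
  have c1: "card I \<le> card T2" using ext_I[OF c0] card_mono[OF fin GT2[of c0]] by linarith
  have "2 * card I \<le> card T2 \<or> (card I \<le> card T2 \<and> p * p \<le> card SB + card T1)"
  proof (cases "\<exists>v2. v2 \<notin> ext B2 c0")
    case True
    then obtain v2 where v2: "v2 \<notin> ext B2 c0" by blast
    then have v2B: "v2 \<notin> B2" using ext_base by blast
    have "card (G B2 c0 \<union> G B2 v2) = card (G B2 c0) + card (G B2 v2)"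
      using card_Un_disjoint[OF fin fin G_disjoint[OF B2sub v2]] .
    moreover have "card (G B2 c0 \<union> G B2 v2) \<le> card T2" using card_mono[OF fin] GT2 by (metis Un_least)
    ultimately have "2 * card I \<le> card T2" using ext_I[OF c0] ext_I[OF v2B] by linarith
    then show ?thesis by blast
  next
    case False
    then have U: "ext B2 c0 = UNIV" by blast
    have "ext B2 c0 \<subseteq> (\<lambda>(w, k). w + nsmul k c0) ` (B2 \<times> {..<p})"
    proof
      fix y assume "y \<in> ext B2 c0"
      then obtain w k where wk: "w \<in> B2" "y = w + nsmul k c0" unfolding ext_iff by blast
      then have "y = w + nsmul (k mod p) c0" using nsmul_mod by metis
      moreover have "k mod p < p" using p_pos by simp
      ultimately show "y \<in> (\<lambda>(w, k). w + nsmul k c0) ` (B2 \<times> {..<p})" using wk(1) by force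
    qed
    then have "card (UNIV::'a set) \<le> card ((\<lambda>(w, k). w + nsmul k c0) ` (B2 \<times> {..<p}))"
      using U card_mono finA by metis
    also have "\<dots> \<le> card (B2 \<times> {..<p})" by (rule card_image_le) (use finA in simp)
    also have "\<dots> = card B2 * p" by (simp add: card_cartesian_product)
    finally have "p ^ n \<le> p * card B2" using cardU by (simp add: mult.commute)
    also have "\<dots> \<le> p * (p * card {S. is_subspace S \<and> S \<subseteq> B2})"
      using lines_bound[OF B2sub] by simp
    finally have A: "p ^ n \<le> p * (p * card {S. is_subspace S \<and> S \<subseteq> B2})" .
    have "p ^ 4 \<le> p ^ n" using n4 p_pos by (simp add: power_increasing)
    then have "p * (p * (p * p)) \<le> p ^ n" by (simp add: power4_eq_xxxx mult.assoc)
    then have "p * (p * (p * p)) \<le> p * (p * card {S. is_subspace S \<and> S \<subseteq> B2})" using A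
      by linarith
    then have "p * (p * p) \<le> p * card {S. is_subspace S \<and> S \<subseteq> B2}"
      using nat_mult_le_cancel1[OF p_pos] by blast
    then have "p * p \<le> card {S. is_subspace S \<and> S \<subseteq> B2}"
      using nat_mult_le_cancel1[OF p_pos] by blast
    moreover have "card {S. is_subspace S \<and> S \<subseteq> B2} = card SB + card T1"
    proof -
      have "{S. is_subspace S \<and> S \<subseteq> B2} = SB \<union> T1" "SB \<inter> T1 = {}"
        unfolding SB_def T1_def using annB2 by blast+
      then show ?thesis using card_Un_disjoint[OF fin fin] by simp
    qed
    ultimately show ?thesis using c1 by simp
  qed
  moreover have "card SB \<ge> 2"
  proof -
    have "{{0}, ann} \<subseteq> SB" unfolding SB_def using zero_sub ann_sub ann_sub
      unfolding is_subspace_def by auto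
    then have "card {{0::'a}, ann} \<le> card SB" using card_mono[OF fin] by blast
    then show ?thesis using ann0 by (simp add: eq_commute)
  qed
  ultimately show ?thesis
    using arith2[OF i_le fib1 T1eq fib2 X2T2 cI _ _ s_eq] by blast
qed

end



lemma addspan_zero: "S \<subseteq> {0} \<Longrightarrow> addspan S = {0::'a::ab_group_add}"
proof
  assume S: "S \<subseteq> {0}"
  show "addspan S \<subseteq> {0}"
  proof
    fix x assume "x \<in> addspan S"
    then show "x \<in> {0}" by induction (use S in auto)
  qed
  show "{0} \<subseteq> addspan S" using addspan.zero by blast
qed

lemma addspan_ann: "(\<forall>s\<in>S. a * s = 0) \<Longrightarrow> x \<in> addspan S \<Longrightarrow> a * x = (0::'a::comm_ring)"
proof -
  assume h: "\<forall>s\<in>S. a * s = 0" and x: "x \<in> addspan S"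
  from x show ?thesis by induction (use h in \<open>auto simp: distrib_left\<close>)
qed

lemma apow2_eq: "apow 2 = addspan {a * b | a b. (b::'a::comm_ring) \<in> UNIV}"
  by (simp add: numeral_2_eq_2)
lemma apow3_eq: "apow 3 = addspan {a * b | a b. (b::'a::comm_ring) \<in> apow 2}"
  by (simp add: numeral_3_eq_3 numeral_2_eq_2)
lemma apow4_eq: "apow 4 = addspan {a * b | a b. (b::'a::comm_ring) \<in> apow 3}"
proof -
  have "apow (Suc 3) = addspan {a * b | a b. (b::'a::comm_ring) \<in> apow 3}"
    by (simp only: apow.simps) simp
  moreover have "Suc 3 = (4::nat)" by simp
  ultimately show ?thesis by metis
qed

lemma m2: "a * b \<in> apow 2" unfolding apow2_eq by (rule addspan.base) blast
lemma m3: "a * (b * c) \<in> apow 3" unfolding apow3_eq by (rule addspan.base) (use m2 in blast)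
lemma m4: "a * (b * (c * d)) \<in> apow 4" unfolding apow4_eq by (rule addspan.base) (use m3 in blast)

theorem proposition2p9:
  fixes p n :: nat
  assumes "prime p"
    and "\<forall>x :: 'a :: {comm_ring, finite}. nsmul p x = 0"
    and "card (UNIV :: 'a set) = p ^ n"
    and "apow p = ({0} :: 'a set)"
  shows "(apow 2 \<noteq> ({0} :: 'a set) \<and> apow 3 = ({0} :: 'a set) \<and> p \<ge> 3 \<and> n \<ge> 3 \<longrightarrow>
            real (num_ideals TYPE('a)) \<le> 2 / real p * real (num_subspaces TYPE('a)))
       \<and> (apow 3 \<noteq> ({0} :: 'a set) \<and> apow 4 = ({0} :: 'a set) \<and> p \<ge> 3 \<and> n \<ge> 4 \<longrightarrow>
            real (num_ideals TYPE('a)) \<le> 2 / real p ^ 2 * real (num_subspaces TYPE('a)))"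
proof -
  interpret fp p "TYPE('a)" by unfold_locales (use assms in auto)
  have pp: "real p > 0" using p_pos by simp
  show ?thesis
  proof (intro conjI impI)
    assume h: "apow 2 \<noteq> ({0} :: 'a set) \<and> apow 3 = ({0} :: 'a set) \<and> p \<ge> 3 \<and> n \<ge> 3"
    have prod3: "a * (b * c) = 0" for a b c :: 'a using m3[of a b c] h by simp
    have "\<exists>a0 b0::'a. a0 * b0 \<noteq> 0"
    proof (rule ccontr)
      assume "\<not> (\<exists>a0 b0::'a. a0 * b0 \<noteq> 0)"
      then have "{a * b | a b. (b::'a) \<in> UNIV} \<subseteq> {0}" by auto
      then have "apow 2 = ({0}::'a set)" unfolding apow2_eq by (rule addspan_zero)
      then show False using h by blast
    qed
    then obtain a0 b0 :: 'a where nz: "a0 * b0 \<noteq> 0" by blast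
    have "p * card {I::'a set. is_ideal I} \<le> 2 * card {S::'a set. is_subspace S}"
      using part1[OF prod3 nz assms(3)] h by blast
    then have "real p * real (num_ideals TYPE('a)) \<le> 2 * real (num_subspaces TYPE('a))"
      unfolding num_ideals_def num_subspaces_def by (metis of_nat_le_iff of_nat_mult of_nat_numeral)
    then show "real (num_ideals TYPE('a)) \<le> 2 / real p * real (num_subspaces TYPE('a))"
      using pp by (simp add: field_simps)
  next
    assume h: "apow 3 \<noteq> ({0} :: 'a set) \<and> apow 4 = ({0} :: 'a set) \<and> p \<ge> 3 \<and> n \<ge> 4"
    have prod4: "a * (b * (c * d)) = 0" for a b c d :: 'a using m4[of a b c d] h by simp
    have "\<exists>a0 b0 c0::'a. a0 * (b0 * c0) \<noteq> 0"
    proof (rule ccontr)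
      assume "\<not> (\<exists>a0 b0 c0::'a. a0 * (b0 * c0) \<noteq> 0)"
      then have all: "a * (b * c) = 0" for a b c :: 'a by blast
      have "x \<in> apow 2 \<Longrightarrow> a * x = 0" for a x :: 'a
        unfolding apow2_eq by (rule addspan_ann[rotated]) (use all in auto)
      then have "{a * b | a b. (b::'a) \<in> apow 2} \<subseteq> {0}" by auto
      then have "apow 3 = ({0}::'a set)" unfolding apow3_eq by (rule addspan_zero)
      then show False using h by blast
    qed
    then obtain a0 b0 c0 :: 'a where nz: "a0 * (b0 * c0) \<noteq> 0" by blast
    have "p * p * card {I::'a set. is_ideal I} \<le> 2 * card {S::'a set. is_subspace S}"
      using part2[OF prod4 nz assms(3)] h by blast
    then have "real p * real p * real (num_ideals TYPE('a)) \<le> 2 * real (num_subspaces TYPE('a))"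
      unfolding num_ideals_def num_subspaces_def by (metis of_nat_le_iff of_nat_mult of_nat_numeral)
    then show "real (num_ideals TYPE('a)) \<le> 2 / real p ^ 2 * real (num_subspaces TYPE('a))"
      using pp by (simp add: field_simps power2_eq_square)
  qed
qed


end
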